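(* Under the setting of the context, assume (TS1). Let $u$ be the solution of problem (P). Then (i) $\lim_{t\to\infty,\,t\in\mathbb{T}}u(0,t)=0$ and (ii) $\int_0^\infty u(0,t)\,\Delta t=\frac{A\mu_x}{k}$.
   Context: A time scale $\mathbb{T}$ is a nonempty closed subset of $\mathbb{R}$; here $\min\mathbb{T}=0$ and $\sup\mathbb{T}=+\infty$. $\sigma(t)=\inf\{s\in\mathbb{T}:s>t\}$ is the forward jump and $\mu_t(t)=\sigma(t)-t$ the graininess; $u^{\Delta_t}$ denotes the (Hilger) delta derivative in $t$ (the ordinary derivative at right-dense points, $(u(x,\sigma(t))-u(x,t))/\mu_t(t)$ at right-scattered points), and $\int\cdot\,\Delta t$ the delta integral, with $\int_0^\infty=\lim_{T\to\infty}\int_0^T$. For $p$ with $1+p\mu_t(t)\ne0$, $e_p(t,s)$ is the time-scale exponential, i.e. the solution of $y^{\Delta}=py$, $y(s)=1$. Fix $A>0$, $k>0$, $\mu_x>0$, $\Omega=\mu_x\mathbb{Z}\times\mathbb{T}$. Problem (P): $u^{\Delta_t}(x,t)+k\frac{u(x,t)-u(x-\mu_x,t)}{\mu_x}=0$ for $(x,t)\in\Omega$, $u(0,0)=A$, $u(x,0)=0$ for $x\ne0$. A solution is $u:\Omega\to\mathbb{R}$ with each $u(x,\cdot)$ delta differentiable on $\mathbb{T}$, satisfying (P), and bounded on $\mu_x\mathbb{Z}\times(\mathbb{T}\cap[0,T_0])$ for every $T_0>0$. Condition (TS1): $1-\frac{k\mu_t(t)}{\mu_x}>0$ for all $t\in\mathbb{T}$.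 *)

theory Defs
  imports Complex_Main
begin

definition ts_sigma :: "real set \<Rightarrow> real \<Rightarrow> real" where
  "ts_sigma T t = (if \<exists>s\<in>T. s > t then Inf {s\<in>T. s > t} else t)"

definition ts_mu :: "real set \<Rightarrow> real \<Rightarrow> real" where
  "ts_mu T t = ts_sigma T t - t"

definition has_delta_derivative :: "real set \<Rightarrow> (real \<Rightarrow> real) \<Rightarrow> real \<Rightarrow> real \<Rightarrow> bool" where
  "has_delta_derivative T f D t \<longleftrightarrow>
     (\<forall>e>0. \<exists>d>0. \<forall>s\<in>T. \<bar>s - t\<bar> < d \<longrightarrow>
        \<bar>f (ts_sigma T t) - f s - D * (ts_sigma T t - s)\<bar> \<le> e * \<bar>ts_sigma T t - s\<bar>)"

definition delta_integral :: "real set \<Rightarrow> (real \<Rightarrow> real) \<Rightarrow> real \<Rightarrow> real \<Rightarrow> real" where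
  "delta_integral T f a b =
     (THE I. \<exists>F. (\<forall>t\<in>T. has_delta_derivative T F (f t) t) \<and> I = F b - F a)"

end

theory Submission
  imports Defs "HOL-Analysis.Analysis" "HOL-Real_Asymp.Real_Asymp"
begin

lemma sigma_ge: "t \<le> ts_sigma T t"
proof (cases "\<exists>s\<in>T. s > t")
  case True
  then have ne: "{s\<in>T. s > t} \<noteq> {}" by auto
  have "t \<le> Inf {s\<in>T. s > t}" by (rule cInf_greatest[OF ne]) auto
  then show ?thesis using True by (simp add: ts_sigma_def)
qed (simp add: ts_sigma_def)

lemma sigma_le: "s \<in> T \<Longrightarrow> t < s \<Longrightarrow> ts_sigma T t \<le> s"
proof -
  assume s: "s \<in> T" "t < s"
  then have ex: "\<exists>s\<in>T. s > t" by auto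
  have bb: "bdd_below {s\<in>T. s > t}" by (rule bdd_belowI[of _ t]) auto
  have "Inf {s\<in>T. s > t} \<le> s" by (rule cInf_lower[OF _ bb]) (use s in auto)
  then show ?thesis using ex by (simp add: ts_sigma_def)
qed

lemma delta_rs:
  assumes t: "t \<in> T" and d: "has_delta_derivative T f D t"
  shows "f (ts_sigma T t) = f t + (ts_sigma T t - t) * D"
proof (rule ccontr)
  define X where "X = f (ts_sigma T t) - f t - D * (ts_sigma T t - t)"
  assume "\<not> ?thesis"
  then have X0: "X \<noteq> 0" unfolding X_def by (auto simp: algebra_simps)
  define m where "m = \<bar>ts_sigma T t - t\<bar>"
  define e where "e = \<bar>X\<bar> / (m + 1)"
  have m0: "m \<ge> 0" unfolding m_def by simp
  have e0: "e > 0" using X0 m0 unfolding e_def by auto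
  obtain dd where "dd > 0" and H: "\<forall>s\<in>T. \<bar>s - t\<bar> < dd \<longrightarrow>
        \<bar>f (ts_sigma T t) - f s - D * (ts_sigma T t - s)\<bar> \<le> e * \<bar>ts_sigma T t - s\<bar>"
    using d e0 unfolding has_delta_derivative_def by blast
  from H t \<open>dd > 0\<close> have "\<bar>X\<bar> \<le> e * m" unfolding X_def m_def by auto
  also have "e * m < \<bar>X\<bar>" unfolding e_def using X0 m0 by (simp add: field_simps)
  finally show False by simp
qed

lemma delta_cont:
  assumes t: "t \<in> T" and d: "has_delta_derivative T f D t"
  shows "continuous (at t within T) f"
  unfolding continuous_within_eps_delta
proof (intro allI impI)
  fix \<epsilon> :: real assume ep: "\<epsilon> > 0"
  define m where "m = \<bar>ts_sigma T t - t\<bar>"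
  define e where "e = \<epsilon> / (2 * (2 * m + 1))"
  have m0: "m \<ge> 0" unfolding m_def by simp
  have e0: "e > 0" using ep m0 unfolding e_def by auto
  obtain dd where "dd > 0" and H: "\<forall>s\<in>T. \<bar>s - t\<bar> < dd \<longrightarrow>
        \<bar>f (ts_sigma T t) - f s - D * (ts_sigma T t - s)\<bar> \<le> e * \<bar>ts_sigma T t - s\<bar>"
    using d e0 unfolding has_delta_derivative_def by blast
  define dl where "dl = min dd (min 1 (\<epsilon> / (2 * (\<bar>D\<bar> + 1))))"
  have dl0: "dl > 0" unfolding dl_def using \<open>dd>0\<close> ep by (auto simp: add_pos_nonneg)
  show "\<exists>\<delta>>0. \<forall>x'\<in>T. dist x' t < \<delta> \<longrightarrow> dist (f x') (f t) < \<epsilon>"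
  proof (intro exI[of _ dl] conjI ballI impI dl0)
    fix s assume s: "s \<in> T" "dist s t < dl"
    have st: "\<bar>s - t\<bar> < dl" using s by (simp add: dist_real_def)
    have h1: "\<bar>f (ts_sigma T t) - f s - D * (ts_sigma T t - s)\<bar> \<le> e * \<bar>ts_sigma T t - s\<bar>"
      using H s st dl_def by auto
    have h2: "\<bar>f (ts_sigma T t) - f t - D * (ts_sigma T t - t)\<bar> \<le> e * m"
      using H t \<open>dd>0\<close> m_def by auto
    have a1: "\<bar>ts_sigma T t - s\<bar> \<le> m + 1"
    proof -
      have "\<bar>s - t\<bar> < 1" using st dl_def by auto
      then show ?thesis unfolding m_def by linarith
    qed
    have "\<bar>f s - f t\<bar> \<le> \<bar>D\<bar> * \<bar>s - t\<bar> + e * \<bar>ts_sigma T t - s\<bar> + e * m"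
    proof -
      have "f s - f t = D * (s - t) - (f (ts_sigma T t) - f s - D * (ts_sigma T t - s))
              + (f (ts_sigma T t) - f t - D * (ts_sigma T t - t))" by (simp add: algebra_simps)
      then have "\<bar>f s - f t\<bar> \<le> \<bar>D * (s - t)\<bar> + \<bar>f (ts_sigma T t) - f s - D * (ts_sigma T t - s)\<bar>
              + \<bar>f (ts_sigma T t) - f t - D * (ts_sigma T t - t)\<bar>" by linarith
      then show ?thesis using h1 h2 by (simp add: abs_mult)
    qed
    also have "\<dots> \<le> \<bar>D\<bar> * dl + e * (2 * m + 1)"
    proof -
      have "\<bar>D\<bar> * \<bar>s - t\<bar> \<le> \<bar>D\<bar> * dl" using st by (simp add: mult_left_mono)
      moreover have "e * \<bar>ts_sigma T t - s\<bar> \<le> e * (m + 1)" using a1 e0 by (simp add: mult_left_mono)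
      ultimately show ?thesis by (simp add: algebra_simps)
    qed
    also have "\<dots> < \<epsilon>"
    proof -
      have "dl \<le> \<epsilon> / (2 * (\<bar>D\<bar> + 1))" unfolding dl_def by simp
      then have "\<bar>D\<bar> * dl \<le> \<bar>D\<bar> * (\<epsilon> / (2 * (\<bar>D\<bar> + 1)))" by (rule mult_left_mono) simp
      also have "\<dots> < \<epsilon> / 2" using ep by (simp add: field_simps)
      finally have "\<bar>D\<bar> * dl < \<epsilon> / 2" .
      moreover have "e * (2 * m + 1) = \<epsilon> / 2" unfolding e_def using m0 by (simp add: field_simps)
      ultimately show ?thesis by simp
    qed
    finally show "dist (f s) (f t) < \<epsilon>" by (simp add: dist_real_def)
  qed
qed

lemma delta_lin:
  assumes df: "has_delta_derivative T f Df t" and dg: "has_delta_derivative T g Dg t"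
  shows "has_delta_derivative T (\<lambda>s. a * f s + b * g s) (a * Df + b * Dg) t"
  unfolding has_delta_derivative_def
proof (intro allI impI)
  fix e :: real assume e: "e > 0"
  define e' where "e' = e / (\<bar>a\<bar> + \<bar>b\<bar> + 1)"
  have e'0: "e' > 0" using e unfolding e'_def by (simp add: add_pos_nonneg)
  obtain d1 where d1: "d1 > 0" "\<forall>s\<in>T. \<bar>s - t\<bar> < d1 \<longrightarrow>
        \<bar>f (ts_sigma T t) - f s - Df * (ts_sigma T t - s)\<bar> \<le> e' * \<bar>ts_sigma T t - s\<bar>"
    using df e'0 unfolding has_delta_derivative_def by blast
  obtain d2 where d2: "d2 > 0" "\<forall>s\<in>T. \<bar>s - t\<bar> < d2 \<longrightarrow>
        \<bar>g (ts_sigma T t) - g s - Dg * (ts_sigma T t - s)\<bar> \<le> e' * \<bar>ts_sigma T t - s\<bar>"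
    using dg e'0 unfolding has_delta_derivative_def by blast
  show "\<exists>d>0. \<forall>s\<in>T. \<bar>s - t\<bar> < d \<longrightarrow>
        \<bar>a * f (ts_sigma T t) + b * g (ts_sigma T t) - (a * f s + b * g s) - (a * Df + b * Dg) * (ts_sigma T t - s)\<bar>
          \<le> e * \<bar>ts_sigma T t - s\<bar>"
  proof (intro exI[of _ "min d1 d2"] conjI ballI impI)
    show "min d1 d2 > 0" using d1 d2 by simp
    fix s assume s: "s \<in> T" "\<bar>s - t\<bar> < min d1 d2"
    define F where "F = f (ts_sigma T t) - f s - Df * (ts_sigma T t - s)"
    define G where "G = g (ts_sigma T t) - g s - Dg * (ts_sigma T t - s)"
    define m where "m = \<bar>ts_sigma T t - s\<bar>"
    have F: "\<bar>F\<bar> \<le> e' * m" using d1 s unfolding F_def m_def by auto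
    have G: "\<bar>G\<bar> \<le> e' * m" using d2 s unfolding G_def m_def by auto
    have eq: "a * f (ts_sigma T t) + b * g (ts_sigma T t) - (a * f s + b * g s) - (a * Df + b * Dg) * (ts_sigma T t - s)
        = a * F + b * G" unfolding F_def G_def by (simp add: algebra_simps)
    have "\<bar>a * F + b * G\<bar> \<le> \<bar>a\<bar> * \<bar>F\<bar> + \<bar>b\<bar> * \<bar>G\<bar>" by (simp add: abs_mult abs_triangle_ineq[THEN order_trans])
    also have "\<dots> \<le> \<bar>a\<bar> * (e' * m) + \<bar>b\<bar> * (e' * m)" using F G by (intro add_mono mult_left_mono) auto
    also have "\<dots> = (\<bar>a\<bar> + \<bar>b\<bar>) * e' * m" by (simp add: algebra_simps)
    also have "\<dots> \<le> e * m"
    proof -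
      have "(\<bar>a\<bar> + \<bar>b\<bar>) * e' \<le> e" unfolding e'_def using e by (simp add: field_simps add_pos_nonneg)
      then show ?thesis unfolding m_def by (simp add: mult_right_mono)
    qed
    finally show "\<bar>a * f (ts_sigma T t) + b * g (ts_sigma T t) - (a * f s + b * g s) - (a * Df + b * Dg) * (ts_sigma T t - s)\<bar>
          \<le> e * \<bar>ts_sigma T t - s\<bar>" using eq m_def by simp
  qed
qed

lemma delta_real:
  assumes rd: "ts_sigma T t = t" and H: "(H has_real_derivative E) (at t)"
  shows "has_delta_derivative T H E t"
  unfolding has_delta_derivative_def rd
proof (intro allI impI)
  fix e :: real assume e: "e > 0"
  have "((\<lambda>y. (H y - H t) / (y - t)) \<longlongrightarrow> E) (at t)" using H has_field_derivative_iff by blast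
  then obtain d where d: "d > 0" "\<forall>y. y \<noteq> t \<and> norm (y - t) < d \<longrightarrow> norm ((H y - H t) / (y - t) - E) < e"
    using e unfolding LIM_eq by blast
  show "\<exists>d>0. \<forall>s\<in>T. \<bar>s - t\<bar> < d \<longrightarrow> \<bar>H t - H s - E * (t - s)\<bar> \<le> e * \<bar>t - s\<bar>"
  proof (intro exI[of _ d] conjI ballI impI d(1))
    fix s assume s: "s \<in> T" "\<bar>s - t\<bar> < d"
    show "\<bar>H t - H s - E * (t - s)\<bar> \<le> e * \<bar>t - s\<bar>"
    proof (cases "s = t")
      case False
      then have "\<bar>(H s - H t) / (s - t) - E\<bar> < e" using d s by auto
      then have "\<bar>((H s - H t) - E * (s - t)) / (s - t)\<bar> < e" using False by (simp add: field_simps)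
      then have "\<bar>(H s - H t) - E * (s - t)\<bar> < e * \<bar>s - t\<bar>" using False by (simp add: abs_divide field_simps)
      then show ?thesis by (simp add: abs_minus_commute algebra_simps)
    qed simp
  qed
qed


lemma ts_induct:
  fixes T :: "real set" and P :: "real \<Rightarrow> bool"
  assumes cl: "closed T" and aT: "a \<in> T" and amin: "\<forall>t\<in>T. a \<le> t" and Pa: "P a"
   and RS: "\<And>t. t\<in>T \<Longrightarrow> ts_sigma T t > t \<Longrightarrow> P t \<Longrightarrow> P (ts_sigma T t)"
   and RD: "\<And>t. t\<in>T \<Longrightarrow> ts_sigma T t = t \<Longrightarrow> P t \<Longrightarrow> \<exists>\<delta>>0. \<forall>s\<in>T. t<s \<and> s<t+\<delta> \<longrightarrow> P s"
   and LD: "\<And>t. t\<in>T \<Longrightarrow> a < t \<Longrightarrow> (\<forall>s\<in>T. s<t \<longrightarrow> P s) \<Longrightarrow> (\<forall>\<delta>>0. \<exists>s\<in>T. t-\<delta><s \<and> s<t) \<Longrightarrow> P t"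
  shows "\<forall>t\<in>T. P t"
proof (rule ccontr)
  assume nt: "\<not> (\<forall>t\<in>T. P t)"
  define Bad where "Bad = {t\<in>T. \<not> P t}"
  have ne: "Bad \<noteq> {}" using nt Bad_def by auto
  have bb: "bdd_below Bad" using amin unfolding Bad_def by (intro bdd_belowI[of _ a]) auto
  define ts where "ts = Inf Bad"
  have "ts \<in> closure Bad" using closure_contains_Inf[OF ne bb] ts_def by simp
  moreover have "closure Bad \<subseteq> T" using cl by (simp add: Bad_def closure_minimal)
  ultimately have tsT: "ts \<in> T" by auto
  have low: "\<And>s. s \<in> Bad \<Longrightarrow> ts \<le> s" using cInf_lower[OF _ bb] ts_def by auto
  have below: "\<And>s. s\<in>T \<Longrightarrow> s < ts \<Longrightarrow> P s" using low Bad_def by force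
  have ats: "a \<le> ts" using amin tsT by auto
  have sig_ge: "ts \<le> ts_sigma T ts" by (rule sigma_ge)
  show False
  proof (cases "P ts")
    case True
    have "ts_sigma T ts = ts \<or> ts_sigma T ts > ts" using sig_ge by auto
    then show False
    proof
      assume rd: "ts_sigma T ts = ts"
      obtain \<delta> where \<delta>: "\<delta>>0" "\<forall>s\<in>T. ts<s \<and> s<ts+\<delta> \<longrightarrow> P s" using RD[OF tsT rd True] by auto
      have "\<And>s. s\<in>Bad \<Longrightarrow> ts + \<delta> \<le> s"
      proof -
        fix s assume s: "s \<in> Bad"
        have "ts \<le> s" using low s .
        moreover have "s \<noteq> ts" using s True Bad_def by auto
        ultimately show "ts + \<delta> \<le> s" using \<delta> s Bad_def by force
      qed
      then have "ts + \<delta> \<le> ts" unfolding ts_def by (rule cInf_greatest[OF ne])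
      with \<delta> show False by simp
    next
      assume rs: "ts_sigma T ts > ts"
      have "\<And>s. s\<in>Bad \<Longrightarrow> ts_sigma T ts \<le> s"
      proof -
        fix s assume s: "s \<in> Bad"
        have "ts \<le> s" using low s .
        moreover have "s \<noteq> ts" using s True Bad_def by auto
        ultimately show "ts_sigma T ts \<le> s" using s Bad_def sigma_le by force
      qed
      then have "ts_sigma T ts \<le> ts" unfolding ts_def by (rule cInf_greatest[OF ne])
      with rs show False by simp
    qed
  next
    case False
    have ne_a: "a < ts" using False Pa ats by (cases "a = ts") auto
    show False
    proof (cases "\<forall>\<delta>>0. \<exists>s\<in>T. ts-\<delta><s \<and> s<ts")
      case True
      then show False using LD[OF tsT ne_a] below False by auto
    next
      case False2: False
      then obtain \<delta> where \<delta>: "\<delta>>0" "\<forall>s\<in>T. \<not>(ts-\<delta><s \<and> s<ts)" by auto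
      define L where "L = {s\<in>T. s < ts}"
      have Lne: "L \<noteq> {}" using aT ne_a L_def by auto
      have Lbb: "bdd_above L" unfolding L_def by (intro bdd_aboveI[of _ ts]) auto
      define r where "r = Sup L"
      have "r \<in> closure L" using closure_contains_Sup[OF Lne Lbb] r_def by simp
      moreover have "closure L \<subseteq> T" using cl by (simp add: L_def closure_minimal)
      ultimately have rT: "r\<in>T" by auto
      have rle: "r \<le> ts - \<delta>" unfolding r_def
        by (rule cSup_least[OF Lne]) (use \<delta> L_def in force)
      have Pr: "P r" using below rT rle \<delta> by auto
      have sr: "ts_sigma T r = ts"
      proof -
        have "ts_sigma T r \<le> ts" using sigma_le[OF tsT] rle \<delta> by auto
        moreover have "ts \<le> ts_sigma T r"
        proof -
          have ex: "\<exists>s\<in>T. s > r" using tsT rle \<delta> by (intro bexI[of _ ts]) auto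
          have ne2: "{s\<in>T. s > r} \<noteq> {}" using ex by auto
          have "ts \<le> Inf {s\<in>T. s > r}"
          proof (rule cInf_greatest[OF ne2])
            fix s assume s: "s \<in> {s\<in>T. s > r}"
            show "ts \<le> s"
            proof (rule ccontr)
              assume "\<not> ts \<le> s"
              then have "s \<in> L" using s L_def by auto
              then have "s \<le> r" unfolding r_def by (rule cSup_upper[OF _ Lbb])
              with s show False by auto
            qed
          qed
          then show ?thesis using ex by (simp add: ts_sigma_def)
        qed
        ultimately show ?thesis by simp
      qed
      have "P ts" using RS[OF rT _ Pr] sr rle \<delta> by auto
      with False show False by simp
    qed
  qed
qed

lemma rd_single:
  fixes g :: "real \<Rightarrow> real"
  assumes t: "t\<in>T" and rd: "ts_sigma T t = t" and c: "continuous (at t within T) g"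
    and d: "has_delta_derivative T g D t" and g0: "g t \<le> 0" and neg: "g t = 0 \<Longrightarrow> D < 0"
  shows "\<exists>\<delta>>0. \<forall>s\<in>T. t<s \<and> s<t+\<delta> \<longrightarrow> g s \<le> 0"
proof (cases "g t < 0")
  case True
  then obtain \<delta> where \<delta>: "\<delta> > 0" "\<forall>s\<in>T. dist s t < \<delta> \<longrightarrow> dist (g s) (g t) < - g t"
    using c unfolding continuous_within_eps_delta by (meson neg_0_less_iff_less)
  show ?thesis
  proof (intro exI[of _ \<delta>] conjI ballI impI \<delta>(1))
    fix s assume s: "s \<in> T" "t < s \<and> s < t + \<delta>"
    then have "dist (g s) (g t) < - g t" using \<delta> by (auto simp: dist_real_def)
    then show "g s \<le> 0" by (auto simp: dist_real_def)
  qed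
next
  case False
  then have gt: "g t = 0" using g0 by simp
  have D: "D < 0" using neg gt .
  obtain dd where dd: "dd > 0" "\<forall>s\<in>T. \<bar>s - t\<bar> < dd \<longrightarrow>
        \<bar>g t - g s - D * (t - s)\<bar> \<le> (-D/2) * \<bar>t - s\<bar>"
    using d D unfolding has_delta_derivative_def rd by (metis half_gt_zero_iff neg_0_less_iff_less)
  show ?thesis
  proof (intro exI[of _ dd] conjI ballI impI dd(1))
    fix s assume s: "s \<in> T" "t < s \<and> s < t + dd"
    then have "\<bar>g t - g s - D * (t - s)\<bar> \<le> (-D/2) * \<bar>t - s\<bar>" using dd by auto
    then have "\<bar>- g s + D * (s - t)\<bar> \<le> (-D/2) * (s - t)" using gt s by (simp add: algebra_simps)
    then have "g s \<le> D * (s - t) + (-D/2) * (s - t)" by linarith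
    also have "\<dots> = (D/2) * (s - t)" by (simp add: field_simps)
    also have "\<dots> \<le> 0" using D s by (simp add: mult_nonpos_nonneg)
    finally show "g s \<le> 0" .
  qed
qed

lemma ld_single:
  fixes g :: "real \<Rightarrow> real"
  assumes c: "continuous (at t within T) g" and ld: "\<forall>\<delta>>0. \<exists>s\<in>T. t-\<delta><s \<and> s<t"
    and below: "\<forall>s\<in>T. s<t \<longrightarrow> g s \<le> 0"
  shows "g t \<le> 0"
proof (rule ccontr)
  assume "\<not> g t \<le> 0"
  then have gp: "g t > 0" by simp
  obtain \<delta> where \<delta>: "\<delta> > 0" "\<forall>s\<in>T. dist s t < \<delta> \<longrightarrow> dist (g s) (g t) < g t"
    using c gp unfolding continuous_within_eps_delta by meson
  obtain s where s: "s \<in> T" "t - \<delta> < s" "s < t" using ld \<delta>(1) by blast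
  have "dist (g s) (g t) < g t" using \<delta> s by (auto simp: dist_real_def)
  moreover have "g s \<le> 0" using below s by auto
  ultimately show False by (auto simp: dist_real_def)
qed

lemma compare2:
  fixes T :: "real set" and ga gb Da Db :: "real \<Rightarrow> real"
  assumes cl: "closed T" and aT: "a \<in> T" and amin: "\<forall>t\<in>T. a \<le> t"
   and init1: "ga a \<le> 0" and init2: "gb a \<le> 0"
   and c1: "continuous_on T ga" and c2: "continuous_on T gb"
   and d1: "\<And>t. t\<in>T \<Longrightarrow> ts_sigma T t = t \<Longrightarrow> t < Tm \<Longrightarrow> has_delta_derivative T ga (Da t) t"
   and d2: "\<And>t. t\<in>T \<Longrightarrow> ts_sigma T t = t \<Longrightarrow> t < Tm \<Longrightarrow> has_delta_derivative T gb (Db t) t"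
   and RS: "\<And>t. t\<in>T \<Longrightarrow> ts_sigma T t > t \<Longrightarrow> ts_sigma T t \<le> Tm \<Longrightarrow> ga t \<le> 0 \<Longrightarrow> gb t \<le> 0
            \<Longrightarrow> ga (ts_sigma T t) \<le> 0 \<and> gb (ts_sigma T t) \<le> 0"
   and RDa: "\<And>t. t\<in>T \<Longrightarrow> ts_sigma T t = t \<Longrightarrow> t < Tm \<Longrightarrow> ga t = 0 \<Longrightarrow> gb t \<le> 0 \<Longrightarrow> Da t < 0"
   and RDb: "\<And>t. t\<in>T \<Longrightarrow> ts_sigma T t = t \<Longrightarrow> t < Tm \<Longrightarrow> gb t = 0 \<Longrightarrow> ga t \<le> 0 \<Longrightarrow> Db t < 0"
  shows "\<forall>t\<in>T. t \<le> Tm \<longrightarrow> ga t \<le> 0 \<and> gb t \<le> 0"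
proof (rule ts_induct[OF cl aT amin, where P = "\<lambda>t. t \<le> Tm \<longrightarrow> ga t \<le> 0 \<and> gb t \<le> 0"])
  show "a \<le> Tm \<longrightarrow> ga a \<le> 0 \<and> gb a \<le> 0" using init1 init2 by simp
next
  fix t assume t: "t \<in> T" "ts_sigma T t > t" "t \<le> Tm \<longrightarrow> ga t \<le> 0 \<and> gb t \<le> 0"
  show "ts_sigma T t \<le> Tm \<longrightarrow> ga (ts_sigma T t) \<le> 0 \<and> gb (ts_sigma T t) \<le> 0"
    using RS t by auto
next
  fix t assume t: "t \<in> T" "ts_sigma T t = t" "t \<le> Tm \<longrightarrow> ga t \<le> 0 \<and> gb t \<le> 0"
  show "\<exists>\<delta>>0. \<forall>s\<in>T. t<s \<and> s<t+\<delta> \<longrightarrow> (s \<le> Tm \<longrightarrow> ga s \<le> 0 \<and> gb s \<le> 0)"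
  proof (cases "t < Tm")
    case True
    have cc1: "continuous (at t within T) ga" using c1 t(1) continuous_on_eq_continuous_within by blast
    have cc2: "continuous (at t within T) gb" using c2 t(1) continuous_on_eq_continuous_within by blast
    obtain e1 where e1: "e1>0" "\<forall>s\<in>T. t<s \<and> s<t+e1 \<longrightarrow> ga s \<le> 0"
      using rd_single[OF t(1) t(2) cc1 d1[OF t(1) t(2) True]] t(3) True RDa[OF t(1) t(2) True] by auto
    obtain e2 where e2: "e2>0" "\<forall>s\<in>T. t<s \<and> s<t+e2 \<longrightarrow> gb s \<le> 0"
      using rd_single[OF t(1) t(2) cc2 d2[OF t(1) t(2) True]] t(3) True RDb[OF t(1) t(2) True] by auto
    show ?thesis using e1 e2 by (intro exI[of _ "min e1 e2"]) auto
  next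
    case False
    then show ?thesis by (intro exI[of _ 1]) auto
  qed
next
  fix t assume t: "t \<in> T" "a < t" "\<forall>s\<in>T. s<t \<longrightarrow> (s \<le> Tm \<longrightarrow> ga s \<le> 0 \<and> gb s \<le> 0)"
    "\<forall>\<delta>>0. \<exists>s\<in>T. t-\<delta><s \<and> s<t"
  show "t \<le> Tm \<longrightarrow> ga t \<le> 0 \<and> gb t \<le> 0"
  proof
    assume tT: "t \<le> Tm"
    have cc1: "continuous (at t within T) ga" using c1 t(1) continuous_on_eq_continuous_within by blast
    have cc2: "continuous (at t within T) gb" using c2 t(1) continuous_on_eq_continuous_within by blast
    have "\<forall>s\<in>T. s<t \<longrightarrow> ga s \<le> 0" "\<forall>s\<in>T. s<t \<longrightarrow> gb s \<le> 0" using t(3) tT by auto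
    then show "ga t \<le> 0 \<and> gb t \<le> 0" using ld_single[OF cc1 t(4)] ld_single[OF cc2 t(4)] by auto
  qed
qed

lemma small_zero0:
  fixes a y K :: real
  assumes K: "K > 0" and h: "\<And>\<epsilon>. \<epsilon> > 0 \<Longrightarrow> a \<le> y + \<epsilon> * K"
  shows "a \<le> y"
proof (rule ccontr)
  assume "\<not> a \<le> y"
  define z where "z = a - y"
  have p: "z > 0" using \<open>\<not> a \<le> y\<close> z_def by simp
  define \<epsilon> where "\<epsilon> = z / (2 * K)"
  have e: "\<epsilon> > 0" using p K unfolding \<epsilon>_def by simp
  have eK: "\<epsilon> * K = z / 2" unfolding \<epsilon>_def using K by simp
  have "a \<le> y + \<epsilon> * K" using h[OF e] .
  then have "a \<le> y + z / 2" unfolding eK .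
  then have "z \<le> z / 2" unfolding z_def by linarith
  then show False using p by linarith
qed

lemma small_zero:
  fixes x y K :: real
  assumes K: "K > 0" and h: "\<And>\<epsilon>. \<epsilon> > 0 \<Longrightarrow> \<bar>x\<bar> \<le> y + \<epsilon> * K"
  shows "\<bar>x\<bar> \<le> y"
  using small_zero0[OF K h] .

lemma pow_ineq:
  fixes x y :: real
  assumes "0 \<le> x" "x \<le> y"
  shows "real (Suc j) * (y - x) * x ^ j \<le> y ^ Suc j - x ^ Suc j"
proof -
  have S: "y ^ Suc j - x ^ Suc j = (y - x) * (\<Sum>i<Suc j. x^(Suc j - Suc i) * y^i)"
    by (rule power_diff_sumr2)
  have "(\<Sum>i<Suc j. x^j) \<le> (\<Sum>i<Suc j. x^(Suc j - Suc i) * y^i)"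
  proof (rule sum_mono)
    fix i assume i: "i \<in> {..<Suc j}"
    have "x^j = x^(Suc j - Suc i) * x^i" using i by (simp flip: power_add)
    also have "\<dots> \<le> x^(Suc j - Suc i) * y^i" using assms by (intro mult_left_mono power_mono) auto
    finally show "x^j \<le> x^(Suc j - Suc i) * y^i" .
  qed
  moreover have "(\<Sum>i<Suc j. x^j) = real (Suc j) * x^j" by simp
  ultimately have le: "real (Suc j) * x^j \<le> (\<Sum>i<Suc j. x^(Suc j - Suc i) * y^i)" by simp
  have "real (Suc j) * (y - x) * x ^ j = (y - x) * (real (Suc j) * x^j)" by (simp add: algebra_simps)
  also have "\<dots> \<le> (y - x) * (\<Sum>i<Suc j. x^(Suc j - Suc i) * y^i)"
    by (rule mult_left_mono[OF le]) (use assms in simp)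
  also have "\<dots> = y ^ Suc j - x ^ Suc j" using S by (rule sym)
  finally show ?thesis .
qed

lemma zero_deriv_const:
  fixes G :: "real \<Rightarrow> real"
  assumes cl: "closed T" and T0: "0\<in>T" and nn: "\<forall>t\<in>T. 0\<le>t"
    and d: "\<forall>t\<in>T. has_delta_derivative T G 0 t" and s: "s\<in>T"
  shows "G s = G 0"
proof -
  have cG: "continuous_on T G" using d delta_cont continuous_on_eq_continuous_within by blast
  have bnd: "\<bar>G s - G 0\<bar> \<le> 0 + \<epsilon>*(1+s)" if \<epsilon>: "\<epsilon>>0" for \<epsilon>
  proof -
    define g1 where "g1 = (\<lambda>x. 1 * G x + 1 * (- G 0 - \<epsilon>*(1+x)))"
    define g2 where "g2 = (\<lambda>x. (-1) * G x + 1 * (G 0 - \<epsilon>*(1+x)))"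
    have "\<forall>t\<in>T. t \<le> s \<longrightarrow> g1 t \<le> 0 \<and> g2 t \<le> 0"
    proof (rule compare2[OF cl T0 nn, where Tm = s and Da = "\<lambda>t. -\<epsilon>" and Db = "\<lambda>t. -\<epsilon>"])
      show "g1 0 \<le> 0" "g2 0 \<le> 0" unfolding g1_def g2_def using \<epsilon> by auto
      show "continuous_on T g1" "continuous_on T g2" unfolding g1_def g2_def
        by (intro continuous_intros cG)+
    next
      fix t assume t: "t \<in> T" "ts_sigma T t = t"
      have r1: "((\<lambda>x. - G 0 - \<epsilon>*(1+x)) has_real_derivative -\<epsilon>) (at t)"
        by (auto intro!: derivative_eq_intros)
      have r2: "((\<lambda>x. G 0 - \<epsilon>*(1+x)) has_real_derivative -\<epsilon>) (at t)"
        by (auto intro!: derivative_eq_intros)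
      have "has_delta_derivative T g1 (1*0 + 1*(-\<epsilon>)) t" unfolding g1_def
        by (rule delta_lin[OF d[rule_format, OF t(1)] delta_real[OF t(2) r1]])
      then show "has_delta_derivative T g1 (-\<epsilon>) t" by simp
      have "has_delta_derivative T g2 ((-1)*0 + 1*(-\<epsilon>)) t" unfolding g2_def
        by (rule delta_lin[OF d[rule_format, OF t(1)] delta_real[OF t(2) r2]])
      then show "has_delta_derivative T g2 (-\<epsilon>) t" by simp
    next
      fix t assume t: "t \<in> T" "ts_sigma T t > t" "g1 t \<le> 0" "g2 t \<le> 0"
      have "G (ts_sigma T t) = G t" using delta_rs[OF t(1) d[rule_format, OF t(1)]] by simp
      moreover have "\<epsilon>*(1+t) \<le> \<epsilon>*(1+ts_sigma T t)" using t \<epsilon> by (intro mult_left_mono) auto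
      ultimately show "g1 (ts_sigma T t) \<le> 0 \<and> g2 (ts_sigma T t) \<le> 0"
        using t unfolding g1_def g2_def by simp
    qed (use \<epsilon> in auto)
    with s have "g1 s \<le> 0" "g2 s \<le> 0" by auto
    then show ?thesis unfolding g1_def g2_def by auto
  qed
  have "1 + s > 0" using nn s by auto
  from small_zero[OF this bnd] show ?thesis by simp
qed



lemma aux_fact: fixes r f X :: real shows "r \<noteq> 0 \<Longrightarrow> f \<noteq> 0 \<Longrightarrow> c*(y-x)*(B*X/f) = B*(r*(c*y-c*x)*X)/(r*f)"
  by (simp add: field_simps)

lemma neg_zero:
  fixes U :: "int \<Rightarrow> real \<Rightarrow> real" and c :: real
  assumes cl: "closed T" and T0: "0\<in>T" and nn: "\<forall>t\<in>T. 0\<le>t" and c: "c>0"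
   and TS: "\<forall>t\<in>T. 1 - c*(ts_sigma T t - t) > 0"
   and der: "\<And>n t. t\<in>T \<Longrightarrow> has_delta_derivative T (U n) (-c*(U n t - U (n-1) t)) t"
   and init: "\<And>n. n<0 \<Longrightarrow> U n 0 = 0"
   and bdd: "\<And>T0. T0>0 \<Longrightarrow> \<exists>B. \<forall>n. \<forall>t\<in>T. t \<le> T0 \<longrightarrow> \<bar>U n t\<bar> \<le> B"
   and n: "n < 0" and t: "t \<in> T"
  shows "U n t = 0"
proof -
  have t0: "t \<ge> 0" using nn t by auto
  obtain B where B: "\<forall>n. \<forall>s\<in>T. s \<le> t+1 \<longrightarrow> \<bar>U n s\<bar> \<le> B" using bdd[of "t+1"] t0 by auto
  have B0: "B \<ge> 0"
  proof -
    have "\<bar>U 0 0\<bar> \<le> B" using B T0 t0 by auto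
    then show ?thesis by linarith
  qed
  define P where "P (j::nat) (x::real) = B * (c * x) ^ j / fact j" for j x
  have P0: "P j s \<ge> 0" if "s \<ge> 0" for j s unfolding P_def using B0 c that
    by (intro divide_nonneg_pos mult_nonneg_nonneg zero_le_power) auto
  have cU: "continuous_on T (U m)" for m
    unfolding continuous_on_eq_continuous_within
  proof
    fix x assume "x \<in> T"
    show "continuous (at x within T) (U m)" by (rule delta_cont[OF \<open>x \<in> T\<close> der[OF \<open>x \<in> T\<close>]])
  qed
  have claim: "\<forall>m<0. \<forall>s\<in>T. s \<le> t+1 \<longrightarrow> \<bar>U m s\<bar> \<le> P j s" for j
  proof (induction j)
    case 0
    then show ?case using B by (simp add: P_def)
  next
    case (Suc j)
    note IH = Suc
    show ?case
    proof (intro allI impI ballI)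
      fix m :: int and s :: real assume m: "m < 0" and s: "s \<in> T" "s \<le> t+1"
      have s0: "s \<ge> 0" using nn s by auto
      have "\<bar>U m s\<bar> \<le> P (Suc j) s + \<epsilon> * (1+s)" if ep: "\<epsilon> > 0" for \<epsilon>
      proof -
        define H where "H x = P (Suc j) x + \<epsilon> * (1+x)" for x
        define E where "E x = c * P j x + \<epsilon>" for x
        have H0: "H x \<ge> 0" if "x \<ge> 0" for x unfolding H_def using P0 that ep by simp
        have dH: "(H has_real_derivative E x) (at x)" for x
          unfolding H_def[abs_def] E_def P_def
          apply (auto intro!: derivative_eq_intros)
          apply (simp add: fact_Suc divide_simps)
          apply (cases j)
           apply (auto simp: algebra_simps)
          done
        have cH: "continuous_on T H" unfolding H_def[abs_def] P_def by (intro continuous_intros) auto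
        define ga where "ga = (\<lambda>x. 1 * U m x + (-1) * H x)"
        define gb where "gb = (\<lambda>x. (-1) * U m x + (-1) * H x)"
        have "\<forall>x\<in>T. x \<le> t+1 \<longrightarrow> ga x \<le> 0 \<and> gb x \<le> 0"
        proof (rule compare2[OF cl T0 nn, where Tm = "t+1"
              and Da = "\<lambda>x. 1 * (-c*(U m x - U (m-1) x)) + (-1) * E x"
              and Db = "\<lambda>x. (-1) * (-c*(U m x - U (m-1) x)) + (-1) * E x"])
          have "H 0 > 0" unfolding H_def P_def using ep by simp
          then show "ga 0 \<le> 0" "gb 0 \<le> 0" unfolding ga_def gb_def using init[OF m] by auto
          show "continuous_on T ga" "continuous_on T gb" unfolding ga_def gb_def
            by (intro continuous_intros cU cH)+
        next
          fix x assume x: "x \<in> T" "ts_sigma T x = x"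
          show "has_delta_derivative T ga (1 * (-c*(U m x - U (m-1) x)) + (-1) * E x) x"
            unfolding ga_def by (rule delta_lin[OF der[OF x(1)] delta_real[OF x(2) dH]])
          show "has_delta_derivative T gb ((-1) * (-c*(U m x - U (m-1) x)) + (-1) * E x) x"
            unfolding gb_def by (rule delta_lin[OF der[OF x(1)] delta_real[OF x(2) dH]])
        next
          fix x assume x: "x \<in> T" "ts_sigma T x = x" "x < t+1"
          have x0: "x \<ge> 0" using nn x by auto
          have iv: "\<bar>U (m-1) x\<bar> \<le> P j x" using IH m x by auto
          have Hx: "H x \<ge> 0" using H0 x0 .
          have cu1: "c * U (m-1) x \<le> c * P j x"
            using iv c by (intro mult_left_mono) (auto simp: abs_le_iff)
          have "c * (- U (m-1) x) \<le> c * P j x"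
            using iv c by (intro mult_left_mono) (auto simp: abs_le_iff)
          then have cu2: "- (c * U (m-1) x) \<le> c * P j x" by simp
          note cu = cu1 cu2
          {
            assume "ga x = 0"
            then have "U m x = H x" unfolding ga_def by simp
            then have "-c*(U m x - U (m-1) x) = -(c * H x) + c * U (m-1) x" by (simp add: algebra_simps)
            moreover have "c * H x \<ge> 0" using c Hx by simp
            ultimately show "1 * (-c*(U m x - U (m-1) x)) + (-1) * E x < 0"
              unfolding E_def mult_1 mult_minus1 using cu1 ep by linarith
          }
          {
            assume "gb x = 0"
            then have "U m x = - H x" unfolding gb_def by simp
            then have "(-1) * (-c*(U m x - U (m-1) x)) = -(c * H x) - c * U (m-1) x" by (simp add: algebra_simps)
            moreover have "c * H x \<ge> 0" using c Hx by simp
            ultimately show "(-1) * (-c*(U m x - U (m-1) x)) + (-1) * E x < 0"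
              unfolding E_def mult_1 mult_minus1 using cu2 ep by linarith
          }
        next
          fix x assume x: "x \<in> T" "ts_sigma T x > x" "ts_sigma T x \<le> t+1" "ga x \<le> 0" "gb x \<le> 0"
          define y where "y = ts_sigma T x"
          define q where "q = c * (y - x)"
          have x0: "x \<ge> 0" using nn x by auto
          have q0: "q \<ge> 0" "1 - q > 0" unfolding q_def y_def using c x TS by auto
          have iv: "\<bar>U (m-1) x\<bar> \<le> P j x" using IH m x by auto
          have ux: "\<bar>U m x\<bar> \<le> H x" using x(4,5) unfolding ga_def gb_def by auto
          have Hx: "H x \<ge> 0" using H0 x0 .
          have uy: "U m y = (1-q) * U m x + q * U (m-1) x"
            using delta_rs[OF x(1) der[OF x(1)]] unfolding y_def q_def by (simp add: algebra_simps)
          have "\<bar>U m y\<bar> \<le> (1-q) * \<bar>U m x\<bar> + q * \<bar>U (m-1) x\<bar>"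
            unfolding uy using q0 by (simp add: abs_mult abs_triangle_ineq[THEN order_trans])
          also have "\<dots> \<le> (1-q) * H x + q * P j x"
            using ux iv q0 by (intro add_mono mult_left_mono) auto
          also have "\<dots> \<le> H x + q * P j x" using q0 Hx by (simp add: algebra_simps)
          also have "\<dots> \<le> H y"
          proof -
            have pw: "real (Suc j) * (c*y - c*x) * (c*x) ^ j \<le> (c*y) ^ Suc j - (c*x) ^ Suc j"
              by (rule pow_ineq) (use c x0 x(2) y_def in auto)
            have fs: "fact (Suc j) = real (Suc j) * (fact j :: real)" by (simp add: fact_Suc)
            have "q * P j x = B * (real (Suc j) * (c*y - c*x) * (c*x) ^ j) / fact (Suc j)"
              unfolding q_def P_def fs by (rule aux_fact) auto
            also have "\<dots> \<le> B * ((c*y) ^ Suc j - (c*x) ^ Suc j) / fact (Suc j)"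
              using pw B0 by (intro divide_right_mono mult_left_mono) auto
            also have "\<dots> = P (Suc j) y - P (Suc j) x" unfolding P_def by (simp add: diff_divide_distrib right_diff_distrib)
            finally have "q * P j x \<le> P (Suc j) y - P (Suc j) x" .
            moreover have "\<epsilon> * (1 + x) \<le> \<epsilon> * (1 + y)" using ep x(2) y_def by simp
            ultimately show ?thesis unfolding H_def by simp
          qed
          finally have "\<bar>U m y\<bar> \<le> H y" .
          then show "ga (ts_sigma T x) \<le> 0 \<and> gb (ts_sigma T x) \<le> 0"
            unfolding ga_def gb_def y_def by auto
        qed
        then have "ga s \<le> 0" "gb s \<le> 0" using s by auto
        then show ?thesis unfolding ga_def gb_def H_def by auto
      qed
      then show "\<bar>U m s\<bar> \<le> P (Suc j) s"
        using small_zero[of "1+s" "U m s" "P (Suc j) s"] s0 by auto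
    qed
  qed
  have lim: "(\<lambda>j. P j t) \<longlonglongrightarrow> 0"
  proof -
    have "(\<lambda>j. inverse (fact j) * (c*t)^j) \<longlonglongrightarrow> 0"
      by (rule summable_LIMSEQ_zero[OF summable_exp])
    then have "(\<lambda>j. B * (inverse (fact j) * (c*t)^j)) \<longlonglongrightarrow> 0"
      by (rule tendsto_mult_right_zero)
    then show ?thesis unfolding P_def by (simp add: field_simps)
  qed
  have "\<bar>U n t\<bar> \<le> 0"
    by (rule LIMSEQ_le_const[OF lim]) (use claim n t t0 in auto)
  then show ?thesis by simp
qed


lemma delta_cmult:
  assumes "has_delta_derivative T f D t"
  shows "has_delta_derivative T (\<lambda>s. a * f s) (a * D) t"
  using delta_lin[OF assms assms, of a 0] by simp

lemma decay:
  fixes w :: "real \<Rightarrow> real" and c A :: real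
  assumes cl: "closed T" and T0: "0\<in>T" and nn: "\<forall>t\<in>T. 0\<le>t" and c: "c>0"
   and TS: "\<forall>t\<in>T. 1 - c*(ts_sigma T t - t) > 0" and A: "A \<ge> 0"
   and der: "\<And>t. t\<in>T \<Longrightarrow> has_delta_derivative T w (-c * w t) t"
   and w0: "w 0 = A" and t: "t \<in> T"
  shows "\<bar>w t\<bar> \<le> A / (1 + c*t)"
proof -
  have t0: "t \<ge> 0" using nn t by auto
  have cw: "continuous_on T w"
    unfolding continuous_on_eq_continuous_within
  proof
    fix x assume "x \<in> T"
    show "continuous (at x within T) w" by (rule delta_cont[OF \<open>x \<in> T\<close> der[OF \<open>x \<in> T\<close>]])
  qed
  have "\<bar>w t\<bar> \<le> A / (1 + c*t) + \<epsilon> * 1" if ep: "\<epsilon> > 0" for \<epsilon>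
  proof -
    define H where "H x = A / (1 + c*x) + \<epsilon>" for x
    define E where "E x = - (A * c) / (1 + c*x)^2" for x
    have H0: "H x > 0" if "x \<ge> 0" for x
    proof -
      have "c*x \<ge> 0" using c that by simp
      then have "A / (1 + c*x) \<ge> 0" using A by (intro divide_nonneg_pos) auto
      then show ?thesis unfolding H_def using ep by linarith
    qed
    have dH: "(H has_real_derivative E x) (at x)" if "x \<ge> 0" for x
    proof -
      have "c*x \<ge> 0" using c that by simp
      then have "1 + c*x \<noteq> 0" by linarith
      then show ?thesis unfolding H_def[abs_def] E_def
        apply (auto intro!: derivative_eq_intros)
        apply (simp add: divide_simps power2_eq_square)
        done
    qed
    have nz: "\<forall>x\<in>T. 1 + c*x \<noteq> 0"
    proof
      fix x assume "x \<in> T"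
      then have "x \<ge> 0" using nn by auto
      then have "c*x \<ge> 0" using c by simp
      then show "1 + c*x \<noteq> 0" by linarith
    qed
    have cH: "continuous_on T H" unfolding H_def[abs_def]
      by (intro continuous_intros) (use nz in auto)
    define ga where "ga = (\<lambda>x. 1 * w x + (-1) * H x)"
    define gb where "gb = (\<lambda>x. (-1) * w x + (-1) * H x)"
    have key: "c * A / (1 + c*x)^2 \<le> c * A / (1 + c*x)" if x0: "x \<ge> 0" for x
    proof -
      have d1: "1 \<le> 1 + c*x" using c x0 by simp
      then have "1 + c*x \<le> (1 + c*x)^2" by (simp add: power2_eq_square)
      then show ?thesis using d1 A c by (intro divide_left_mono) auto
    qed
    have "\<forall>x\<in>T. x \<le> t \<longrightarrow> ga x \<le> 0 \<and> gb x \<le> 0"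
    proof (rule compare2[OF cl T0 nn, where Tm = "t"
          and Da = "\<lambda>x. 1 * (-c * w x) + (-1) * E x"
          and Db = "\<lambda>x. (-1) * (-c * w x) + (-1) * E x"])
      have "H 0 = A + \<epsilon>" unfolding H_def by simp
      then show "ga 0 \<le> 0" "gb 0 \<le> 0" unfolding ga_def gb_def using w0 A ep by auto
      show "continuous_on T ga" "continuous_on T gb" unfolding ga_def gb_def
        by (intro continuous_intros cw cH)+
    next
      fix x assume x: "x \<in> T" "ts_sigma T x = x"
      have x0: "x \<ge> 0" using nn x by auto
      show "has_delta_derivative T ga (1 * (-c * w x) + (-1) * E x) x"
        unfolding ga_def by (rule delta_lin[OF der[OF x(1)] delta_real[OF x(2) dH[OF x0]]])
      show "has_delta_derivative T gb ((-1) * (-c * w x) + (-1) * E x) x"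
        unfolding gb_def by (rule delta_lin[OF der[OF x(1)] delta_real[OF x(2) dH[OF x0]]])
    next
      fix x assume x: "x \<in> T" "ts_sigma T x = x" "x < t"
      have x0: "x \<ge> 0" using nn x by auto
      have k: "c * A / (1 + c*x)^2 \<le> c * A / (1 + c*x)" using key[OF x0] .
      have hh: "c * H x = c * A / (1 + c*x) + c * \<epsilon>" unfolding H_def by (simp add: field_simps)
      have ce: "c * \<epsilon> > 0" using c ep by simp
      have EE: "- E x = c * A / (1 + c*x)^2" unfolding E_def by simp
      {
        assume "ga x = 0"
        then have "w x = H x" unfolding ga_def by simp
        then show "1 * (-c * w x) + (-1) * E x < 0" using k hh ce EE by simp
      }
      {
        assume "gb x = 0"
        then have "w x = - H x" unfolding gb_def by simp
        then show "(-1) * (-c * w x) + (-1) * E x < 0" using k hh ce EE by simp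
      }
    next
      fix x assume x: "x \<in> T" "ts_sigma T x > x" "ts_sigma T x \<le> t" "ga x \<le> 0" "gb x \<le> 0"
      define y where "y = ts_sigma T x"
      define q where "q = c * (y - x)"
      have x0: "x \<ge> 0" using nn x by auto
      have q0: "q \<ge> 0" "1 - q > 0" unfolding q_def y_def using c x TS by auto
      have ux: "\<bar>w x\<bar> \<le> H x" using x(4,5) unfolding ga_def gb_def by auto
      have uy: "w y = (1-q) * w x"
        using delta_rs[OF x(1) der[OF x(1)]] unfolding y_def q_def by (simp add: algebra_simps)
      have "\<bar>w y\<bar> = (1-q) * \<bar>w x\<bar>" unfolding uy using q0 by (simp add: abs_mult)
      also have "\<dots> \<le> (1-q) * H x" using ux q0 by (intro mult_left_mono) auto
      also have "\<dots> \<le> H y"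
      proof -
        have cy: "c * y = c * x + q" unfolding q_def by (simp add: algebra_simps)
        have "c*x \<ge> 0" using c x0 by simp
        then have dx: "1 + c*x > 0" by linarith
        have dy: "1 + c*y > 0" using dx cy q0 by simp
        have "(1-q) * (1 + c*y) \<le> 1 + c*x"
        proof -
          have "(1-q) * (1 + c*y) = 1 + c*x - q * (c*x + q)" unfolding cy by (simp add: algebra_simps)
          moreover have "q * (c*x + q) \<ge> 0" using q0 c x0 by simp
          ultimately show ?thesis by simp
        qed
        then have "(1-q) / (1 + c*x) \<le> 1 / (1 + c*y)" using dx dy by (simp add: field_simps)
        then have "A * ((1-q) / (1 + c*x)) \<le> A * (1 / (1 + c*y))" using A by (rule mult_left_mono)
        moreover have "(1-q) * \<epsilon> \<le> \<epsilon>" using q0 ep by simp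
        ultimately show ?thesis unfolding H_def by (simp add: algebra_simps)
      qed
      finally have "\<bar>w y\<bar> \<le> H y" .
      then show "ga (ts_sigma T x) \<le> 0 \<and> gb (ts_sigma T x) \<le> 0"
        unfolding ga_def gb_def y_def by auto
    qed
    then have "ga t \<le> 0" "gb t \<le> 0" using t by auto
    then show ?thesis unfolding ga_def gb_def H_def by auto
  qed
  then show ?thesis using small_zero[of 1 "w t" "A / (1 + c*t)"] by auto
qed


theorem mainTheorem7:
  fixes T :: "real set" and A k mux :: real and u :: "real \<Rightarrow> real \<Rightarrow> real"
  assumes T_closed: "closed T"
    and T_zero: "0 \<in> T"
    and T_min: "\<forall>t\<in>T. 0 \<le> t"
    and T_unbounded: "\<forall>M. \<exists>t\<in>T. t > M"
    and A_pos: "A > 0" and k_pos: "k > 0" and mux_pos: "mux > 0"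
    and TS1: "\<forall>t\<in>T. 1 - k * ts_mu T t / mux > 0"
    and eq: "\<forall>n::int. \<forall>t\<in>T. has_delta_derivative T (\<lambda>s. u (mux * of_int n) s)
               (- k * (u (mux * of_int n) t - u (mux * of_int n - mux) t) / mux) t"
    and init0: "u 0 0 = A"
    and init: "\<forall>n::int. n \<noteq> 0 \<longrightarrow> u (mux * of_int n) 0 = 0"
    and bdd: "\<forall>T0>0. \<exists>B. \<forall>n::int. \<forall>t\<in>T. t \<le> T0 \<longrightarrow> \<bar>u (mux * of_int n) t\<bar> \<le> B"
  shows "((\<lambda>t. u 0 t) \<longlongrightarrow> 0) (inf at_top (principal T))
       \<and> ((\<lambda>s. delta_integral T (\<lambda>t. u 0 t) 0 s) \<longlongrightarrow> A * mux / k) (inf at_top (principal T))"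
proof -
  define c where "c = k / mux"
  define U where "U = (\<lambda>(n::int) t. u (mux * of_int n) t)"
  have c0: "c > 0" unfolding c_def using k_pos mux_pos by simp
  have TS: "\<forall>t\<in>T. 1 - c*(ts_sigma T t - t) > 0" using TS1 by (simp add: c_def ts_mu_def)
  have der: "has_delta_derivative T (U n) (-c*(U n t - U (n-1) t)) t" if t: "t\<in>T" for n t
  proof -
    have "U n = (\<lambda>s. u (mux * of_int n) s)" unfolding U_def by simp
    moreover have "U (n-1) t = u (mux * of_int n - mux) t" unfolding U_def by (simp add: algebra_simps)
    moreover have "-c*(U n t - U (n-1) t) = - k * (U n t - U (n-1) t) / mux" unfolding c_def by simp
    ultimately show ?thesis using eq t unfolding U_def by simp
  qed
  have Uneg: "U n t = 0" if "n < 0" "t \<in> T" for n t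
  proof -
    have i: "\<And>n. n < 0 \<Longrightarrow> U n 0 = 0" using init unfolding U_def by simp
    have b: "\<And>T0. T0 > 0 \<Longrightarrow> \<exists>B. \<forall>n. \<forall>t\<in>T. t \<le> T0 \<longrightarrow> \<bar>U n t\<bar> \<le> B"
      using bdd unfolding U_def by simp
    show ?thesis by (rule neg_zero[OF T_closed T_zero T_min c0 TS der i b that])
  qed
  have der0: "has_delta_derivative T (\<lambda>t. u 0 t) (-c * u 0 t) t" if t: "t \<in> T" for t
  proof -
    have "U (-1) t = 0" using Uneg t by simp
    then show ?thesis using der[OF t, of 0] unfolding U_def by simp
  qed
  have dec: "\<bar>u 0 t\<bar> \<le> A / (1 + c*t)" if "t \<in> T" for t
    using decay[OF T_closed T_zero T_min c0 TS _ der0 _ that] A_pos init0 by auto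
  define F where "F = inf at_top (principal T)"
  have evT: "eventually (\<lambda>t. t \<in> T) F" unfolding F_def eventually_inf_principal by simp
  have lim1: "((\<lambda>t. u 0 t) \<longlongrightarrow> 0) F"
  proof (rule Lim_null_comparison)
    show "eventually (\<lambda>t. norm (u 0 t) \<le> A / (1 + c*t)) F"
      using evT by (rule eventually_mono) (use dec in auto)
    have "((\<lambda>t. A / (1 + c*t)) \<longlongrightarrow> 0) at_top" using c0 by real_asymp
    then show "((\<lambda>t. A / (1 + c*t)) \<longlongrightarrow> 0) F" unfolding F_def
      by (rule tendsto_mono[rotated]) simp
  qed
  have int: "delta_integral T (\<lambda>t. u 0 t) 0 s = (A - u 0 s) / c" if s: "s \<in> T" for s
    unfolding delta_integral_def
  proof (rule the_equality)
    define G where "G = (\<lambda>x. (-1/c) * u 0 x)"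
    have "has_delta_derivative T G ((-1/c) * (-c * u 0 t)) t" if "t \<in> T" for t
      unfolding G_def by (rule delta_cmult[OF der0[OF that]])
    then have "\<forall>t\<in>T. has_delta_derivative T G (u 0 t) t" using c0 by simp
    moreover have "(A - u 0 s) / c = G s - G 0" unfolding G_def using init0 c0 by (simp add: field_simps)
    ultimately show "\<exists>G. (\<forall>t\<in>T. has_delta_derivative T G (u 0 t) t) \<and> (A - u 0 s) / c = G s - G 0"
      by blast
  next
    fix I assume "\<exists>G. (\<forall>t\<in>T. has_delta_derivative T G (u 0 t) t) \<and> I = G s - G 0"
    then obtain G where G: "\<forall>t\<in>T. has_delta_derivative T G (u 0 t) t" "I = G s - G 0" by blast
    define K where "K = (\<lambda>x. 1 * G x + (1/c) * u 0 x)"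
    have "has_delta_derivative T K (1 * u 0 t + (1/c) * (-c * u 0 t)) t" if "t \<in> T" for t
      unfolding K_def by (rule delta_lin[OF G(1)[rule_format, OF that] der0[OF that]])
    then have "\<forall>t\<in>T. has_delta_derivative T K 0 t" using c0 by simp
    then have "K s = K 0" by (rule zero_deriv_const[OF T_closed T_zero T_min _ s])
    then have "c * (G s - G 0) = A - u 0 s" using init0 c0 unfolding K_def by (simp add: field_simps)
    moreover have "I = (c * (G s - G 0)) / c" using c0 G(2) by simp
    ultimately show "I = (A - u 0 s) / c" by simp
  qed
  have lim2: "((\<lambda>s. delta_integral T (\<lambda>t. u 0 t) 0 s) \<longlongrightarrow> A * mux / k) F"
  proof -
    have l0: "((\<lambda>s. (A - u 0 s) / c) \<longlongrightarrow> (A - 0) / c) F" by (intro tendsto_intros lim1) (use c0 in simp)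
    have eqc: "(A - 0) / c = A * mux / k" unfolding c_def using k_pos mux_pos by simp
    have l1: "((\<lambda>s. (A - u 0 s) / c) \<longlongrightarrow> A * mux / k) F" using l0 unfolding eqc .
    have ev: "eventually (\<lambda>s. (A - u 0 s) / c = delta_integral T (\<lambda>t. u 0 t) 0 s) F"
      using evT by (rule eventually_mono) (use int in simp)
    show ?thesis using iffD1[OF tendsto_cong[OF ev] l1] .
  qed
  show ?thesis using lim1 lim2 unfolding F_def by simp
qed

end
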